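(* Let $q$ be an odd prime power, $n=2^v$ with $v\ge1$, $s$ an odd integer and $t$ an integer with $qt\equiv t\pmod{2^v}$. If Type-I duadic splittings of $\mathbb{Z}_{2^v}$ given by $\rho_{s,t}$ exist, then Type-I duadic splittings of $\mathbb{Z}_{2^v}$ given by $\tau_t=\rho_{1,t}$ exist.
   Context: $\mu_q:\mathbb{Z}_n\to\mathbb{Z}_n$, $i\mapsto qi\bmod n$; $P$ is $\mu_q$-invariant if $\mu_q(P)=P$. $\rho_{s,t}:\mathbb{Z}_n\to\mathbb{Z}_n$, $i\mapsto s(i+t)\bmod n$; $\tau_t(i)=i+t\bmod n$. Type-I duadic splittings of $\mathbb{Z}_n$ given by $\rho_{s,t}$ exist if there is a $\mu_q$-invariant $P$ with $\mathbb{Z}_n=P\cup\rho_{s,t}(P)$ a disjoint union. *)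

theory Defs
  imports "HOL-Computational_Algebra.Primes"
begin

text \<open>Z_n is represented by the residues {0..<n} of int; all maps reduce mod n.\<close>

definition Zn :: "int \<Rightarrow> int set" where
  "Zn n = {0..<n}"

definition mu :: "int \<Rightarrow> int \<Rightarrow> int \<Rightarrow> int" where
  "mu n q i = (q * i) mod n"

definition rho :: "int \<Rightarrow> int \<Rightarrow> int \<Rightarrow> int \<Rightarrow> int" where
  "rho n s t i = (s * (i + t)) mod n"

definition mu_invariant :: "int \<Rightarrow> int \<Rightarrow> int set \<Rightarrow> bool" where
  "mu_invariant n q P \<longleftrightarrow> mu n q ` P = P"

definition typeI_duadic_exists :: "int \<Rightarrow> int \<Rightarrow> int \<Rightarrow> int \<Rightarrow> bool" where
  "typeI_duadic_exists n q s t \<longleftrightarrow>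
     (\<exists>P. P \<subseteq> Zn n \<and> mu_invariant n q P \<and>
          P \<union> rho n s t ` P = Zn n \<and> P \<inter> rho n s t ` P = {})"

definition prime_power :: "int \<Rightarrow> bool" where
  "prime_power q \<longleftrightarrow> (\<exists>p k. prime p \<and> k \<ge> 1 \<and> q = p ^ k)"

end

theory Submission
  imports Defs
begin

lemma odd_inv:
  fixes w :: int assumes "odd w"
  shows "\<exists>\<alpha> \<beta>. \<alpha> * w + \<beta> * 2^v = 1"
proof -
  have "coprime w (2^v)" using assms by (simp add: coprime_commute)
  then have "gcd w (2^v) = 1" by simp
  then show ?thesis using bezout_int[of w "2^v"] by metis
qed

lemma decomp2:
  fixes x :: int assumes "x \<noteq> 0"
  obtains c w where "x = 2^c * w" "odd w"
proof -
  have "\<not> is_unit (2::int)" by simp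
  then show ?thesis using multiplicity_decompose'[of x 2] assms that by blast
qed

lemma solve_lin:
  fixes x t u :: int
  assumes t: "t = 2^a*u" and nd: "\<not> (2::int)^(a+1) dvd x"
  shows "\<exists>i. (x*i) mod 2^v = t mod 2^v"
proof -
  have "x \<noteq> 0" using nd by auto
  then obtain c w where x: "x = 2^c * w" "odd w" using decomp2 by blast
  have "c \<le> a"
  proof (rule ccontr)
    assume "\<not> c \<le> a"
    then have "(2::int)^(a+1) dvd 2^c" by (intro le_imp_power_dvd) simp
    then show False using nd x by (simp add: dvd_mult2)
  qed
  obtain \<alpha> \<beta> where ab: "\<alpha> * w + \<beta> * 2^v = 1" using odd_inv[OF x(2)] by blast
  have "x * (\<alpha> * 2^(a-c) * u) = 2^c * 2^(a-c) * u * (\<alpha>*w)" using x by (simp add: algebra_simps)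
  also have "2^c * 2^(a-c) = (2::int)^a" using \<open>c \<le> a\<close> by (simp add: power_add[symmetric])
  also have "\<alpha>*w = 1 - \<beta> * 2^v" using ab by simp
  finally have "x * (\<alpha> * 2^(a-c) * u) = t + (- t * \<beta>) * 2^v" using t by (simp add: algebra_simps)
  then show ?thesis by (metis mod_mult_self1)
qed

lemma rho_inj:
  fixes s t i j :: int
  assumes "odd s" "i \<in> Zn (2^v)" "j \<in> Zn (2^v)" "rho (2^v) s t i = rho (2^v) s t j"
  shows "i = j"
proof -
  have "(2::int)^v dvd s*(i+t) - s*(j+t)" using assms(4) unfolding rho_def
    by (simp add: mod_eq_dvd_iff)
  then have "(2::int)^v dvd s*(i-j)" by (simp add: algebra_simps)
  moreover have "coprime ((2::int)^v) s" using assms(1) by simp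
  ultimately have "(2::int)^v dvd i - j" using coprime_dvd_mult_right_iff by blast
  then obtain k where k: "i - j = 2^v * k" by blast
  have "i - j < 2^v" "j - i < 2^v" using assms(2,3) unfolding Zn_def by auto
  then have "k = 0" using k
    by (smt (verit) mult_le_cancel_left1 mult_minus_right zero_less_power)
  then show ?thesis using k by simp
qed

lemma no_bad:
  fixes s t k i :: int and P :: "int set"
  assumes s: "odd s"
    and P1: "P \<subseteq> Zn (2^v)" and Pk: "mu (2^v) k ` P \<subseteq> P"
    and P3: "P \<union> rho (2^v) s t ` P = Zn (2^v)" and P4: "P \<inter> rho (2^v) s t ` P = {}"
    and kt: "(k*t) mod 2^v = t mod 2^v"
    and i: "i \<in> Zn (2^v)" and eq: "rho (2^v) s t i = mu (2^v) k i"
  shows False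
proof (cases "i \<in> P")
  case True
  then have "mu (2^v) k i \<in> P" using Pk by blast
  moreover have "rho (2^v) s t i \<in> rho (2^v) s t ` P" using True by blast
  ultimately show False using P4 eq by auto
next
  case False
  then obtain j where j: "j \<in> P" "i = rho (2^v) s t j" using P3 i by blast
  have mj: "mu (2^v) k j \<in> P" using Pk j by blast
  have "rho (2^v) s t (mu (2^v) k j) = mu (2^v) k (rho (2^v) s t j)"
  proof -
    have "rho (2^v) s t (mu (2^v) k j) = (s*(k*j + t)) mod 2^v"
      unfolding rho_def mu_def by (metis mod_add_left_eq mod_mult_right_eq)
    also have "\<dots> = (s*(k*j + k*t)) mod 2^v"
      using kt by (metis mod_add_right_eq mod_mult_right_eq)
    also have "\<dots> = (k*(s*(j+t))) mod 2^v" by (simp add: algebra_simps)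
    also have "\<dots> = mu (2^v) k (rho (2^v) s t j)"
      unfolding rho_def mu_def by (metis mod_mult_right_eq)
    finally show ?thesis .
  qed
  also have "\<dots> = rho (2^v) s t i" using j eq by simp
  finally have "mu (2^v) k j = i"
    using rho_inj[OF s] mj P1 i by blast
  then show False using mj False by simp
qed

lemma addhalf:
  fixes x :: int assumes "x mod 2^(a+1) < 2^a"
  shows "(x + 2^a) mod 2^(a+1) = x mod 2^(a+1) + 2^a"
proof -
  have "(x + 2^a) mod 2^(a+1) = (x mod 2^(a+1) + 2^a) mod 2^(a+1)" by (simp add: mod_add_left_eq)
  also have "\<dots> = x mod 2^(a+1) + 2^a"
    using assms by (intro mod_pos_pos_trivial) auto
  finally show ?thesis .
qed

lemma subhalf:
  fixes x :: int assumes "x mod 2^(a+1) \<ge> 2^a"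
  shows "(x - 2^a) mod 2^(a+1) = x mod 2^(a+1) - 2^a"
proof -
  have "(x - 2^a) mod 2^(a+1) = (x mod 2^(a+1) - 2^a) mod 2^(a+1)" by (simp add: mod_diff_left_eq)
  also have "\<dots> = x mod 2^(a+1) - 2^a"
  proof (intro mod_pos_pos_trivial)
    have "x mod 2^(a+1) < 2^(a+1)" by simp
    moreover have "(2::int)^(a+1) = 2*2^a" by simp
    moreover have "(0::int) < 2^a" by simp
    ultimately show "x mod 2 ^ (a + 1) - 2 ^ a < 2 ^ (a + 1)" by linarith
  qed (use assms in auto)
  finally show ?thesis .
qed

theorem lemma3p7:
  fixes q s t :: int and v :: nat
  assumes "prime_power q" and "odd q" and "v \<ge> 1" and "odd s"
    and "(q * t) mod (2 ^ v) = t mod (2 ^ v)"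
    and "typeI_duadic_exists (2 ^ v) q s t"
  shows "typeI_duadic_exists (2 ^ v) q 1 t"
proof -
  obtain P where P1: "P \<subseteq> Zn (2^v)" and P2: "mu (2^v) q ` P = P"
    and P3: "P \<union> rho (2^v) s t ` P = Zn (2^v)" and P4: "P \<inter> rho (2^v) s t ` P = {}"
    using assms(6) unfolding typeI_duadic_exists_def mu_invariant_def by auto
  have mu1: "mu (2^v) 1 ` P \<subseteq> P"
  proof
    fix x assume "x \<in> mu (2^v) 1 ` P"
    then obtain y where "y \<in> P" "x = mu (2^v) 1 y" by blast
    moreover have "y mod 2^v = y" using \<open>y \<in> P\<close> P1 unfolding Zn_def by auto
    ultimately show "x \<in> P" unfolding mu_def by simp
  qed
  have bad: False if k: "mu (2^v) k ` P \<subseteq> P" "(k*t) mod 2^v = t mod 2^v"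
     and tu: "t = 2^a * u" and nd: "\<not> (2::int)^(a+1) dvd (k - s)" for k u :: int and a
  proof -
    obtain i0 where i0: "((k - s)*i0) mod 2^v = t mod 2^v" using solve_lin[OF tu nd] by blast
    define i where "i = (s*i0) mod 2^v"
    have iZ: "i \<in> Zn (2^v)" unfolding i_def Zn_def by simp
    have d: "(2::int)^v dvd t - (k-s)*i0" using i0 by (metis mod_eq_dvd_iff)
    have "rho (2^v) s t i = (s*(s*i0 + t)) mod 2^v"
      unfolding rho_def i_def by (metis mod_add_left_eq mod_mult_right_eq)
    also have "\<dots> = (k*(s*i0)) mod 2^v"
    proof -
      have "s*(s*i0 + t) - k*(s*i0) = s*(t - (k-s)*i0)" by (simp add: algebra_simps)
      then have "(2::int)^v dvd s*(s*i0 + t) - k*(s*i0)" using d by simp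
      then show ?thesis by (simp add: mod_eq_dvd_iff)
    qed
    also have "\<dots> = mu (2^v) k i" unfolding mu_def i_def by (metis mod_mult_right_eq)
    finally show False using no_bad[OF assms(4) P1 k(1) P3 P4 k(2) iZ] by blast
  qed
  have t0: "t mod 2^v \<noteq> 0"
  proof
    assume "t mod 2^v = 0"
    then have "rho (2^v) s t 0 = mu (2^v) 1 0" unfolding rho_def mu_def
      by (metis add_0 mod_0 mod_mult_right_eq mult_zero_right)
    moreover have "(0::int) \<in> Zn (2^v)" unfolding Zn_def by simp
    ultimately show False using no_bad[OF assms(4) P1 mu1 P3 P4] by simp
  qed
  then have "t \<noteq> 0" by auto
  then obtain a u where tu: "t = 2^a * u" and u: "odd u" using decomp2 by blast
  have av: "a < v"
  proof (rule ccontr)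
    assume "\<not> a < v"
    then have "(2::int)^v dvd 2^a" by (intro le_imp_power_dvd) simp
    then have "(2::int)^v dvd t" using tu by simp
    then show False using t0 by simp
  qed
  have qa: "(2::int)^(a+1) dvd (q - 1)"
  proof (rule ccontr)
    assume nq: "\<not> (2::int)^(a+1) dvd (q - 1)"
    show False
    proof (cases "(2::int)^(a+1) dvd (1 - s)")
      case True
      have "q - s = (q - 1) + (1 - s)" by simp
      then have "\<not> (2::int)^(a+1) dvd (q - s)" using True nq
        by (metis dvd_add_left_iff)
      then show False using bad[of q, OF _ assms(5) tu] P2 by simp
    next
      case False
      then show False using bad[of 1, OF mu1 _ tu] by simp
    qed
  qed
  define m :: int where "m = 2^(a+1)"
  define Q where "Q = {i \<in> Zn (2^v). i mod m < 2^a}"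
  have mn: "m dvd 2^v" unfolding m_def using av by (intro le_imp_power_dvd) simp
  have modm: "(x mod 2^v) mod m = x mod m" for x :: int using mn by (simp add: mod_mod_cancel)
  obtain w where uw: "u = 2*w + 1" using u by (metis oddE)
  have tm: "t = 2^a + m*w" unfolding m_def using tu uw by (simp add: algebra_simps)
  have qm: "(q*x) mod m = x mod m" for x :: int
  proof -
    have "m dvd (q-1)*x" using qa unfolding m_def by simp
    then show ?thesis by (simp add: mod_eq_dvd_iff algebra_simps)
  qed
  have inZ: "x mod 2^v \<in> Zn (2^v)" for x :: int unfolding Zn_def by simp
  have "mu (2^v) q ` Q = Q"
  proof
    show "mu (2^v) q ` Q \<subseteq> Q"
    proof
      fix x assume "x \<in> mu (2^v) q ` Q"
      then obtain y where y: "y \<in> Q" "x = (q*y) mod 2^v" unfolding mu_def by blast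
      then show "x \<in> Q" unfolding Q_def using modm qm inZ by auto
    qed
  next
    show "Q \<subseteq> mu (2^v) q ` Q"
    proof
      fix j assume j: "j \<in> Q"
      obtain \<alpha> \<beta> where ab: "\<alpha> * q + \<beta> * 2^v = 1" using odd_inv[OF assms(2)] by blast
      have "m dvd \<alpha> - 1"
      proof -
        have "\<alpha> - 1 = - \<alpha>*(q-1) - \<beta> * 2^v" using ab by (simp add: algebra_simps)
        moreover have "m dvd \<alpha>*(q-1)" using qa unfolding m_def by simp
        moreover have "m dvd \<beta> * 2^v" using mn by simp
        ultimately show ?thesis by simp
      qed
      then have am: "(\<alpha>*x) mod m = x mod m" for x :: int
      proof -
        assume h: "m dvd \<alpha> - 1"
        have "m dvd (\<alpha> - 1)*x" using h by simp
        then show ?thesis by (simp add: mod_eq_dvd_iff left_diff_distrib)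
      qed
      define i where "i = (\<alpha>*j) mod 2^v"
      have "i \<in> Q" using j unfolding Q_def i_def using modm am inZ by auto
      moreover have "mu (2^v) q i = j"
      proof -
        have "mu (2^v) q i = ((\<alpha>*q)*j) mod 2^v" unfolding mu_def i_def
          by (metis mod_mult_right_eq mult.assoc mult.commute)
        also have "\<dots> = (j + (-\<beta>*j)*2^v) mod 2^v"
        proof -
          have "\<alpha>*q = 1 - \<beta>*2^v" using ab by simp
          then have "(\<alpha>*q)*j = (1 - \<beta>*2^v)*j" by simp
          also have "\<dots> = j + (-\<beta>*j)*2^v" by (simp add: algebra_simps)
          finally have "(\<alpha>*q)*j = j + (-\<beta>*j)*2^v" .
          then show ?thesis by simp
        qed
        also have "\<dots> = j mod 2^v" by (rule mod_mult_self1)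
        also have "\<dots> = j" using j unfolding Q_def Zn_def by auto
        finally show ?thesis .
      qed
      ultimately show "j \<in> mu (2^v) q ` Q" by blast
    qed
  qed
  moreover have "Q \<inter> rho (2^v) 1 t ` Q = {}"
  proof (rule ccontr)
    assume "Q \<inter> rho (2^v) 1 t ` Q \<noteq> {}"
    then obtain i where i: "i \<in> Q" "rho (2^v) 1 t i \<in> Q" by blast
    have "(rho (2^v) 1 t i) mod m = (i + t) mod m" unfolding rho_def using modm by simp
    also have "\<dots> = (i + 2^a) mod m" unfolding tm by (simp add: add.assoc[symmetric])
    also have "\<dots> = i mod m + 2^a" unfolding m_def
      using i(1) unfolding Q_def m_def by (intro addhalf) auto
    moreover have "0 \<le> i mod m" unfolding m_def by simp
    ultimately show False using i(2) unfolding Q_def by auto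
  qed
  moreover have "Q \<union> rho (2^v) 1 t ` Q = Zn (2^v)"
  proof
    show "Q \<union> rho (2^v) 1 t ` Q \<subseteq> Zn (2^v)" unfolding Q_def rho_def using inZ by auto
  next
    show "Zn (2^v) \<subseteq> Q \<union> rho (2^v) 1 t ` Q"
    proof
      fix j assume j: "j \<in> Zn (2^v)"
      show "j \<in> Q \<union> rho (2^v) 1 t ` Q"
      proof (cases "j \<in> Q")
        case True then show ?thesis by blast
      next
        case False
        then have jm: "j mod m \<ge> 2^a" using j unfolding Q_def by auto
        define i where "i = (j - t) mod 2^v"
        have "i mod m = (j - t) mod m" unfolding i_def using modm by simp
        also have "\<dots> = (j - 2^a) mod m" unfolding tm
          by (metis diff_diff_eq mod_diff_right_eq mod_mult_self1_is_0 diff_zero)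
        also have "\<dots> = j mod m - 2^a" unfolding m_def using jm unfolding m_def
          by (intro subhalf) auto
        finally have "i \<in> Q" unfolding Q_def i_def using inZ m_def by auto
        moreover have "rho (2^v) 1 t i = j" unfolding rho_def i_def
          using j unfolding Zn_def by (simp add: mod_add_left_eq)
        ultimately show ?thesis by blast
      qed
    qed
  qed
  moreover have "Q \<subseteq> Zn (2^v)" unfolding Q_def by auto
  ultimately show ?thesis unfolding typeI_duadic_exists_def mu_invariant_def by blast
qed

end
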